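(* Let $q$ be a power of an odd prime and $d\ge 3$ an integer. Any set $A\subset\mathbb{F}_q$ with $|A|\gg q^{1/2}$ has $\gg |A|^d$ square-sum-type tuples, i.e. tuples $(x_1,\dots,x_d)\in A^d$ such that $x_1^2+\cdots+x_d^2$ is a square in $\mathbb{F}_q$.
   Context: An element $t\in\mathbb{F}_q$ is a square if $t=u^2$ for some $u\in\mathbb{F}_q$. $X\ll Y$ means $X\le CY$ for a constant $C>0$ independent of $q$ and $A$ (the hypothesis $|A|\gg q^{1/2}$ means $|A|\ge c\,q^{1/2}$ for a suitable such constant $c$). *)

theory Defs
  imports "HOL-Algebra.Algebra" "HOL-Computational_Algebra.Primes"
begin

definition is_square_in :: "('a, 'b) ring_scheme \<Rightarrow> 'a \<Rightarrow> bool" where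
  "is_square_in R t \<longleftrightarrow> (\<exists>u \<in> carrier R. t = u \<otimes>\<^bsub>R\<^esub> u)"

definition square_sum_tuples :: "('a, 'b) ring_scheme \<Rightarrow> 'a set \<Rightarrow> nat \<Rightarrow> (nat \<Rightarrow> 'a) set" where
  "square_sum_tuples R A d =
     {x \<in> {..<d} \<rightarrow>\<^sub>E A. is_square_in R (finsum R (\<lambda>i. x i \<otimes>\<^bsub>R\<^esub> x i) {..<d})}"

end

theory Submission
  imports Defs
begin
context field begin
lemma diff_sq: "x \<in> carrier R \<Longrightarrow> y \<in> carrier R \<Longrightarrow> (x \<ominus> y) \<otimes> (x \<oplus> y) = x \<otimes> x \<ominus> y \<otimes> y"
  by algebra
lemma sq_eq: assumes "x \<in> carrier R" "y \<in> carrier R" "x \<otimes> x = y \<otimes> y" shows "x = y \<or> x = \<ominus> y"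
proof -
  have "(x \<ominus> y) \<otimes> (x \<oplus> y) = \<zero>" using assms by (simp add: diff_sq)
  then have "x \<ominus> y = \<zero> \<or> x \<oplus> y = \<zero>" using assms integral minus_closed add.m_closed by metis
  then show ?thesis using assms
    by (metis a_minus_def add.inv_closed add.inv_solve_right l_neg minus_equality r_neg1 zero_closed)
qed
lemma eq_iff_diff: "a \<in> carrier R \<Longrightarrow> b \<in> carrier R \<Longrightarrow> c \<in> carrier R \<Longrightarrow> (a = b \<oplus> c) \<longleftrightarrow> (a \<ominus> c = b)"
proof
  assume "a \<in> carrier R" "b \<in> carrier R" "c \<in> carrier R" "a = b \<oplus> c"
  then show "a \<ominus> c = b" by algebra
next
  assume h: "a \<in> carrier R" "b \<in> carrier R" "c \<in> carrier R" "a \<ominus> c = b"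
  have "a = (a \<ominus> c) \<oplus> c" using h(1-3) by algebra
  then show "a = b \<oplus> c" using h by simp
qed
lemma sqrt_card: assumes "finite (carrier R)" shows "card {y \<in> carrier R. y \<otimes> y = t} \<le> 2"
proof (cases "\<exists>y0 \<in> carrier R. y0 \<otimes> y0 = t")
  case True
  then obtain y0 where y0: "y0 \<in> carrier R" "y0 \<otimes> y0 = t" by blast
  have "{y \<in> carrier R. y \<otimes> y = t} \<subseteq> {y0, \<ominus> y0}" using sq_eq y0 by auto
  then have "card {y \<in> carrier R. y \<otimes> y = t} \<le> card {y0, \<ominus> y0}" by (intro card_mono) auto
  also have "\<dots> \<le> 2" by (simp add: card_insert_le_m1)
  finally show ?thesis .
next
  case False
  have "{y \<in> carrier R. y \<otimes> y = t} = {}" using False by auto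
  then show ?thesis by (metis card.empty le0)
qed
lemma char2_square: assumes fin: "finite (carrier R)" and two: "\<one> \<oplus> \<one> = \<zero>" and t: "t \<in> carrier R"
  shows "is_square_in R t"
proof -
  have neg: "\<ominus> y = y" if "y \<in> carrier R" for y
  proof -
    have "y \<oplus> y = (\<one> \<oplus> \<one>) \<otimes> y" using that by algebra
    then have "y \<oplus> y = \<zero>" using two that by simp
    then show ?thesis using that by (metis minus_equality)
  qed
  have "inj_on (\<lambda>x. x \<otimes> x) (carrier R)"
    by (rule inj_onI) (metis sq_eq neg)
  then have "(\<lambda>x. x \<otimes> x) ` carrier R = carrier R"
    using fin by (intro endo_inj_surj) auto
  then show ?thesis using t unfolding is_square_in_def by blast
qed
lemma card_diff_ne: assumes fin: "finite (carrier R)" and two: "\<one> \<oplus> \<one> \<noteq> \<zero>" and dl: "\<delta> \<in> carrier R" "\<delta> \<noteq> \<zero>"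
  shows "card {(y, y'). y \<in> carrier R \<and> y' \<in> carrier R \<and> y \<otimes> y \<ominus> y' \<otimes> y' = \<delta>} \<le> card (carrier R)"
proof -
  let ?S = "{(y, y'). y \<in> carrier R \<and> y' \<in> carrier R \<and> y \<otimes> y \<ominus> y' \<otimes> y' = \<delta>}"
  have "inj_on (\<lambda>(y, y'). y \<ominus> y') ?S"
  proof (rule inj_onI)
    fix p1 p2 assume P: "p1 \<in> ?S" "p2 \<in> ?S" "(\<lambda>(y, y'). y \<ominus> y') p1 = (\<lambda>(y, y'). y \<ominus> y') p2"
    obtain y1 y1' where p1: "p1 = (y1, y1')" by (cases p1)
    obtain y2 y2' where p2: "p2 = (y2, y2')" by (cases p2)
    have c: "y1 \<in> carrier R" "y1' \<in> carrier R" "y2 \<in> carrier R" "y2' \<in> carrier R"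
      and e1: "y1 \<otimes> y1 \<ominus> y1' \<otimes> y1' = \<delta>" and e2: "y2 \<otimes> y2 \<ominus> y2' \<otimes> y2' = \<delta>"
      and u: "y1 \<ominus> y1' = y2 \<ominus> y2'" using P p1 p2 by auto
    have "(y1 \<ominus> y1') \<otimes> (y1 \<oplus> y1') = \<delta>" using e1 c diff_sq by simp
    moreover have "(y1 \<ominus> y1') \<otimes> (y2 \<oplus> y2') = \<delta>" using e2 c diff_sq u by simp
    ultimately have eq: "(y1 \<ominus> y1') \<otimes> (y1 \<oplus> y1') = (y1 \<ominus> y1') \<otimes> (y2 \<oplus> y2')" by simp
    have "y1 \<ominus> y1' \<noteq> \<zero>" using \<open>(y1 \<ominus> y1') \<otimes> (y1 \<oplus> y1') = \<delta>\<close> dl c by (metis add.m_closed l_null)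
    then have p: "y1 \<oplus> y1' = y2 \<oplus> y2'" using eq c m_lcancel by simp
    have "(\<one> \<oplus> \<one>) \<otimes> y1 = (y1 \<ominus> y1') \<oplus> (y1 \<oplus> y1')" using c by algebra
    also have "\<dots> = (y2 \<ominus> y2') \<oplus> (y2 \<oplus> y2')" using u p by simp
    also have "\<dots> = (\<one> \<oplus> \<one>) \<otimes> y2" using c by algebra
    finally have "y1 = y2" using two c m_lcancel by simp
    then show "p1 = p2" using p c p1 p2 by simp
  qed
  moreover have "(\<lambda>(y, y'). y \<ominus> y') ` ?S \<subseteq> carrier R" by auto
  ultimately show ?thesis using fin card_inj_on_le by blast
qed
lemma card_diff_zero: assumes fin: "finite (carrier R)"
  shows "card {(y, y'). y \<in> carrier R \<and> y' \<in> carrier R \<and> y \<otimes> y \<ominus> y' \<otimes> y' = \<zero>} \<le> 2 * card (carrier R)"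
proof -
  let ?S = "{(y, y'). y \<in> carrier R \<and> y' \<in> carrier R \<and> y \<otimes> y \<ominus> y' \<otimes> y' = \<zero>}"
  have "?S = (\<lambda>(a, b). (b, a)) ` (SIGMA y':carrier R. {y \<in> carrier R. y \<otimes> y = y' \<otimes> y'})"
    using eq_iff_diff[of _ \<zero>] by (auto simp: image_iff)
  then have "card ?S \<le> card (SIGMA y':carrier R. {y \<in> carrier R. y \<otimes> y = y' \<otimes> y'})"
    using fin by (metis (no_types, lifting) card_image_le finite_SigmaI finite_subset mem_Collect_eq subsetI)
  also have "\<dots> = (\<Sum>y'\<in>carrier R. card {y \<in> carrier R. y \<otimes> y = y' \<otimes> y'})" using fin by simp
  also have "\<dots> \<le> (\<Sum>y'\<in>carrier R. 2)" by (intro sum_mono sqrt_card fin)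
  finally show ?thesis by simp
qed

definition Dq :: "'a \<times> 'a \<Rightarrow> 'a" where "Dq p = snd p \<otimes> snd p \<ominus> fst p \<otimes> fst p"
definition gc :: "'a set \<Rightarrow> 'a \<Rightarrow> nat" where "gc A v = card {p \<in> A \<times> carrier R. Dq p = v}"

lemma sum_gc: assumes fin: "finite (carrier R)" and A: "A \<subseteq> carrier R"
  shows "(\<Sum>v\<in>carrier R. gc A v) = card A * card (carrier R)"
proof -
  have fA: "finite A" using fin A finite_subset by blast
  have "(\<Sum>v\<in>carrier R. \<Sum>x\<in>{p. p \<in> A \<times> carrier R \<and> Dq p = v}. (1::nat)) = (\<Sum>x\<in>A \<times> carrier R. 1)"
    using fin fA A by (intro sum.group) (auto simp: Dq_def)
  then show ?thesis by (simp add: gc_def card_cartesian_product)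
qed

lemma diff_swap: "y \<in> carrier R \<Longrightarrow> a \<in> carrier R \<Longrightarrow> y' \<in> carrier R \<Longrightarrow> a' \<in> carrier R \<Longrightarrow>
   (y \<ominus> a = y' \<ominus> a') \<longleftrightarrow> (y \<ominus> y' = a \<ominus> a')"
proof
  assume c: "y \<in> carrier R" "a \<in> carrier R" "y' \<in> carrier R" "a' \<in> carrier R" and h: "y \<ominus> a = y' \<ominus> a'"
  have "y \<ominus> y' = ((y \<ominus> a) \<ominus> (y' \<ominus> a')) \<oplus> (a \<ominus> a')" using c by algebra
  also have "\<dots> = a \<ominus> a'" using h c by simp algebra
  finally show "y \<ominus> y' = a \<ominus> a'" .
next
  assume c: "y \<in> carrier R" "a \<in> carrier R" "y' \<in> carrier R" "a' \<in> carrier R" and h: "y \<ominus> y' = a \<ominus> a'"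
  have "y \<ominus> a = ((y \<ominus> y') \<ominus> (a \<ominus> a')) \<oplus> (y' \<ominus> a')" using c by algebra
  also have "\<dots> = y' \<ominus> a'" using h c by simp algebra
  finally show "y \<ominus> a = y' \<ominus> a'" .
qed

lemma sum_gc2: assumes fin: "finite (carrier R)" and A: "A \<subseteq> carrier R" and two: "\<one> \<oplus> \<one> \<noteq> \<zero>"
  shows "(\<Sum>v\<in>carrier R. gc A v ^ 2) \<le> card A ^ 2 * card (carrier R) + 2 * card A * card (carrier R)"
proof -
  have fA: "finite A" using fin A finite_subset by blast
  let ?S = "A \<times> carrier R"
  let ?S2 = "{x \<in> ?S \<times> ?S. Dq (fst x) = Dq (snd x)}"
  have fS2: "finite ?S2" using fA fin by auto
  have "(\<Sum>v\<in>carrier R. gc A v ^ 2) = (\<Sum>v\<in>carrier R. card {x. x \<in> ?S2 \<and> Dq (fst x) = v})"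
  proof (intro sum.cong refl)
    fix v assume "v \<in> carrier R"
    have "{x. x \<in> ?S2 \<and> Dq (fst x) = v} = {p \<in> ?S. Dq p = v} \<times> {p \<in> ?S. Dq p = v}" by auto
    then show "gc A v ^ 2 = card {x. x \<in> ?S2 \<and> Dq (fst x) = v}"
      by (simp add: gc_def card_cartesian_product power2_eq_square)
  qed
  also have "\<dots> = (\<Sum>v\<in>carrier R. \<Sum>x\<in>{x. x \<in> ?S2 \<and> Dq (fst x) = v}. (1::nat))" by simp
  also have "\<dots> = (\<Sum>x\<in>?S2. 1)"
    using fin fS2 A by (intro sum.group) (auto simp: Dq_def)
  also have "\<dots> = (\<Sum>k\<in>A \<times> A. \<Sum>x\<in>{x. x \<in> ?S2 \<and> (fst (fst x), fst (snd x)) = k}. (1::nat))"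
    using fA fS2 by (intro sum.group[symmetric]) auto
  also have "\<dots> \<le> (\<Sum>k\<in>A \<times> A. if fst k \<otimes> fst k = snd k \<otimes> snd k then 2 * card (carrier R) else card (carrier R))"
  proof (intro sum_mono)
    fix k assume k: "k \<in> A \<times> A"
    obtain a a' where kk: "k = (a, a')" by (cases k)
    have ca: "a \<in> carrier R" "a' \<in> carrier R" using k kk A by auto
    let ?E = "{(y, y'). y \<in> carrier R \<and> y' \<in> carrier R \<and> y \<otimes> y \<ominus> y' \<otimes> y' = a \<otimes> a \<ominus> a' \<otimes> a'}"
    have "{x. x \<in> ?S2 \<and> (fst (fst x), fst (snd x)) = k} = (\<lambda>(y, y'). ((a, y), (a', y'))) ` ?E"
    proof
      show "{x. x \<in> ?S2 \<and> (fst (fst x), fst (snd x)) = k} \<subseteq> (\<lambda>(y, y'). ((a, y), (a', y'))) ` ?E"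
      proof
        fix x assume x: "x \<in> {x. x \<in> ?S2 \<and> (fst (fst x), fst (snd x)) = k}"
        obtain b y b' y' where xx: "x = ((b, y), (b', y'))" by (metis prod.collapse)
        have "b = a" "b' = a'" "y \<in> carrier R" "y' \<in> carrier R" using x xx kk by auto
        moreover have "y \<otimes> y \<ominus> a \<otimes> a = y' \<otimes> y' \<ominus> a' \<otimes> a'" using x xx kk by (auto simp: Dq_def)
        ultimately have "(y, y') \<in> ?E" using diff_swap ca by auto
        then show "x \<in> (\<lambda>(y, y'). ((a, y), (a', y'))) ` ?E" using xx \<open>b = a\<close> \<open>b' = a'\<close> by force
      qed
    next
      show "(\<lambda>(y, y'). ((a, y), (a', y'))) ` ?E \<subseteq> {x. x \<in> ?S2 \<and> (fst (fst x), fst (snd x)) = k}"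
        using k kk ca diff_swap by (auto simp: Dq_def)
    qed
    moreover have "inj_on (\<lambda>(y, y'). ((a, y), (a', y'))) ?E" by (auto simp: inj_on_def)
    ultimately have "card {x. x \<in> ?S2 \<and> (fst (fst x), fst (snd x)) = k} = card ?E"
      by (simp add: card_image)
    also have "\<dots> \<le> (if a \<otimes> a = a' \<otimes> a' then 2 * card (carrier R) else card (carrier R))"
    proof (cases "a \<otimes> a = a' \<otimes> a'")
      case True
      then have "a \<otimes> a \<ominus> a' \<otimes> a' = \<zero>" using ca by (simp add: r_neg minus_eq)
      then show ?thesis using True card_diff_zero[OF fin] by simp
    next
      case False
      then have "a \<otimes> a \<ominus> a' \<otimes> a' \<noteq> \<zero>" using ca eq_iff_diff[of "a \<otimes> a" \<zero> "a' \<otimes> a'"] by auto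
      then show ?thesis using False card_diff_ne[OF fin two] ca by simp
    qed
    finally show "(\<Sum>x\<in>{x. x \<in> ?S2 \<and> (fst (fst x), fst (snd x)) = k}. (1::nat)) \<le> (if fst k \<otimes> fst k = snd k \<otimes> snd k then 2 * card (carrier R) else card (carrier R))"
      using kk by simp
  qed
  also have "\<dots> = (\<Sum>a\<in>A. \<Sum>a'\<in>A. card (carrier R) + (if a \<otimes> a = a' \<otimes> a' then card (carrier R) else 0))"
    unfolding sum.cartesian_product by (intro sum.cong refl) auto
  also have "\<dots> = (\<Sum>a\<in>A. card A * card (carrier R) + card {a'\<in>A. a' \<otimes> a' = a \<otimes> a} * card (carrier R))"
  proof (intro sum.cong refl)
    fix a assume "a \<in> A"
    have "(\<Sum>a'\<in>A. (if a \<otimes> a = a' \<otimes> a' then card (carrier R) else 0)) = (\<Sum>a'\<in>A. (if a' \<otimes> a' = a \<otimes> a then card (carrier R) else 0))"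
      by (intro sum.cong) auto
    also have "\<dots> = (\<Sum>a'\<in>{a'\<in>A. a' \<otimes> a' = a \<otimes> a}. card (carrier R))"
      using sum.inter_filter[OF fA, of "\<lambda>_. card (carrier R)" "\<lambda>a'. a' \<otimes> a' = a \<otimes> a"] by simp
    finally have "(\<Sum>a'\<in>A. (if a \<otimes> a = a' \<otimes> a' then card (carrier R) else 0)) = card {a'\<in>A. a' \<otimes> a' = a \<otimes> a} * card (carrier R)" by simp
    then show "(\<Sum>a'\<in>A. card (carrier R) + (if a \<otimes> a = a' \<otimes> a' then card (carrier R) else 0)) = card A * card (carrier R) + card {a'\<in>A. a' \<otimes> a' = a \<otimes> a} * card (carrier R)"
      by (simp add: sum.distrib)
  qed
  also have "\<dots> \<le> (\<Sum>a\<in>A. card A * card (carrier R) + 2 * card (carrier R))"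
  proof (intro sum_mono add_left_mono mult_right_mono)
    fix a assume "a \<in> A"
    have "card {a'\<in>A. a' \<otimes> a' = a \<otimes> a} \<le> card {a'\<in>carrier R. a' \<otimes> a' = a \<otimes> a}"
      using A fin by (intro card_mono) auto
    then show "card {a'\<in>A. a' \<otimes> a' = a \<otimes> a} \<le> 2" using sqrt_card[OF fin] le_trans by blast
  qed auto
  also have "\<dots> = card A ^ 2 * card (carrier R) + 2 * card A * card (carrier R)"
    by (simp add: power2_eq_square algebra_simps)
  finally show ?thesis .
qed

lemma sum_fiber_le: assumes fin: "finite (carrier R)" and A: "A \<subseteq> carrier R" and s: "s \<in> carrier R"
    and h: "\<And>v. v \<in> carrier R \<Longrightarrow> h v \<ge> (0::real)"
  shows "(\<Sum>b\<in>A. h (s \<oplus> b \<otimes> b)) \<le> 2 * (\<Sum>v\<in>carrier R. h v)"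
proof -
  have fA: "finite A" using fin A finite_subset by blast
  have "(\<Sum>b\<in>A. h (s \<oplus> b \<otimes> b)) = (\<Sum>v\<in>carrier R. \<Sum>b\<in>{b. b \<in> A \<and> s \<oplus> b \<otimes> b = v}. h (s \<oplus> b \<otimes> b))"
    using fA fin A s by (intro sum.group[symmetric]) auto
  also have "\<dots> = (\<Sum>v\<in>carrier R. h v * card {b. b \<in> A \<and> s \<oplus> b \<otimes> b = v})"
  proof (intro sum.cong refl)
    fix v assume "v \<in> carrier R"
    have "(\<Sum>b\<in>{b. b \<in> A \<and> s \<oplus> b \<otimes> b = v}. h (s \<oplus> b \<otimes> b)) = (\<Sum>b\<in>{b. b \<in> A \<and> s \<oplus> b \<otimes> b = v}. h v)"
      by (intro sum.cong) auto
    then show "(\<Sum>b\<in>{b. b \<in> A \<and> s \<oplus> b \<otimes> b = v}. h (s \<oplus> b \<otimes> b)) = h v * card {b. b \<in> A \<and> s \<oplus> b \<otimes> b = v}"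
      by simp
  qed
  also have "\<dots> \<le> (\<Sum>v\<in>carrier R. h v * 2)"
  proof (intro sum_mono mult_left_mono)
    fix v assume v: "v \<in> carrier R"
    show "0 \<le> h v" using h v .
    have "{b. b \<in> A \<and> s \<oplus> b \<otimes> b = v} \<subseteq> {b \<in> carrier R. b \<otimes> b = v \<ominus> s}"
    proof
      fix b assume b: "b \<in> {b. b \<in> A \<and> s \<oplus> b \<otimes> b = v}"
      then have bc: "b \<in> carrier R" using A by auto
      have "v = b \<otimes> b \<oplus> s" using b bc s by (simp add: a_comm)
      then have "v \<ominus> s = b \<otimes> b" using eq_iff_diff[of v "b \<otimes> b" s] bc s v by simp
      then show "b \<in> {b \<in> carrier R. b \<otimes> b = v \<ominus> s}" using bc by simp
    qed
    then have "card {b. b \<in> A \<and> s \<oplus> b \<otimes> b = v} \<le> card {b \<in> carrier R. b \<otimes> b = v \<ominus> s}"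
      using fin by (intro card_mono) auto
    also have "\<dots> \<le> 2" by (rule sqrt_card[OF fin])
    finally show "real (card {b. b \<in> A \<and> s \<oplus> b \<otimes> b = v}) \<le> 2" by simp
  qed
  finally show ?thesis by (simp add: sum_distrib_left mult.commute)
qed

lemma ind_ge: assumes fin: "finite (carrier R)"
  shows "real (card {y \<in> carrier R. y \<otimes> y = t}) \<le> 2 * (if is_square_in R t then 1 else 0)"
proof (cases "is_square_in R t")
  case True
  then show ?thesis using sqrt_card[OF fin, of t] by simp
next
  case False
  then have "{y \<in> carrier R. y \<otimes> y = t} = {}" unfolding is_square_in_def by auto
  then have "card {y \<in> carrier R. y \<otimes> y = t} = 0" by (metis card.empty)
  with False show ?thesis by simp
qed

lemma count_main: assumes fin: "finite (carrier R)" and A: "A \<subseteq> carrier R" and two: "\<one> \<oplus> \<one> \<noteq> \<zero>"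
    and s: "s \<in> carrier R" and big: "32 * real (card (carrier R)) \<le> real (card A) ^ 2"
  shows "real (card A) ^ 2 / 4 \<le> (\<Sum>a\<in>A. \<Sum>b\<in>A. (if is_square_in R ((s \<oplus> a \<otimes> a) \<oplus> b \<otimes> b) then 1 else 0 :: real))"
proof -
  have fA: "finite A" using fin A finite_subset by blast
  define M where "M = real (card A)"
  define q where "q = real (card (carrier R))"
  define G where "G v = real (gc A v)" for v
  have q0: "q > 0" using fin s unfolding q_def by (auto simp: card_gt_0_iff)
  have "0 < M ^ 2" using big q0 unfolding M_def q_def by linarith
  then have "M \<noteq> 0" by auto
  moreover have "M \<ge> 0" by (simp add: M_def)
  ultimately have M0: "M > 0" by linarith
  have step1: "G v / 2 \<le> (\<Sum>b\<in>A. (if is_square_in R (v \<oplus> b \<otimes> b) then 1 else 0 :: real))" if v: "v \<in> carrier R" for v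
  proof -
    have "{p \<in> A \<times> carrier R. Dq p = v} = (SIGMA b:A. {y \<in> carrier R. y \<otimes> y = v \<oplus> b \<otimes> b})"
      using A v eq_iff_diff by (auto simp: Dq_def)
    then have "gc A v = (\<Sum>b\<in>A. card {y \<in> carrier R. y \<otimes> y = v \<oplus> b \<otimes> b})"
      using fA fin by (simp add: gc_def)
    then have "G v = (\<Sum>b\<in>A. real (card {y \<in> carrier R. y \<otimes> y = v \<oplus> b \<otimes> b}))"
      by (simp add: G_def)
    also have "\<dots> \<le> (\<Sum>b\<in>A. 2 * (if is_square_in R (v \<oplus> b \<otimes> b) then 1 else 0 :: real))"
      by (intro sum_mono ind_ge fin)
    finally show ?thesis by (simp only: sum_distrib_left[symmetric])
  qed
  have sG: "(\<Sum>v\<in>carrier R. G v) = M * q"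
    using sum_gc[OF fin A] unfolding G_def M_def q_def by (metis of_nat_mult of_nat_sum)
  have sG2: "(\<Sum>v\<in>carrier R. G v ^ 2) \<le> M ^ 2 * q + 2 * M * q"
  proof -
    have "(\<Sum>v\<in>carrier R. G v ^ 2) = real (\<Sum>v\<in>carrier R. gc A v ^ 2)" by (simp add: G_def)
    also have "\<dots> \<le> real (card A ^ 2 * card (carrier R) + 2 * card A * card (carrier R))"
      using sum_gc2[OF fin A two] by linarith
    finally show ?thesis by (simp add: M_def q_def)
  qed
  have var: "(\<Sum>v\<in>carrier R. (G v - M) ^ 2) \<le> 2 * M * q"
  proof -
    have "(\<Sum>v\<in>carrier R. (G v - M) ^ 2) = (\<Sum>v\<in>carrier R. G v ^ 2) - 2 * M * (\<Sum>v\<in>carrier R. G v) + q * M ^ 2"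
      by (simp add: power2_diff sum.distrib sum_subtractf sum_distrib_left q_def algebra_simps)
    then show ?thesis using sG sG2 by (simp add: power2_eq_square algebra_simps)
  qed
  have varA: "(\<Sum>a\<in>A. (G (s \<oplus> a \<otimes> a) - M) ^ 2) \<le> 4 * M * q"
    using sum_fiber_le[OF fin A s, of "\<lambda>v. (G v - M) ^ 2"] var by simp
  have pw: "3 * M / 4 - (G v - M) ^ 2 / M \<le> G v" for v
  proof -
    have "0 \<le> (\<bar>G v - M\<bar> - M / 2) ^ 2" by simp
    then have "M * \<bar>G v - M\<bar> \<le> (G v - M) ^ 2 + M ^ 2 / 4"
      by (simp add: power2_diff power2_eq_square algebra_simps abs_mult_self_eq)
    then have "\<bar>G v - M\<bar> \<le> (G v - M) ^ 2 / M + M / 4"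
      using M0 by (simp add: field_simps power2_eq_square)
    moreover have "M - G v \<le> \<bar>G v - M\<bar>" by linarith
    ultimately show ?thesis by linarith
  qed
  have "(\<Sum>a\<in>A. (3 * M / 4 - (G (s \<oplus> a \<otimes> a) - M) ^ 2 / M)) \<le> (\<Sum>a\<in>A. G (s \<oplus> a \<otimes> a))"
    by (intro sum_mono pw)
  moreover have "(\<Sum>a\<in>A. (3 * M / 4 - (G (s \<oplus> a \<otimes> a) - M) ^ 2 / M)) = 3 * M ^ 2 / 4 - (\<Sum>a\<in>A. (G (s \<oplus> a \<otimes> a) - M) ^ 2) / M"
    by (simp add: sum_subtractf sum_divide_distrib M_def power2_eq_square)
  moreover have "(\<Sum>a\<in>A. (G (s \<oplus> a \<otimes> a) - M) ^ 2) / M \<le> 4 * q"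
    using varA M0 by (simp add: divide_le_eq algebra_simps)
  ultimately have lowG: "3 * M ^ 2 / 4 - 4 * q \<le> (\<Sum>a\<in>A. G (s \<oplus> a \<otimes> a))" by linarith
  have "(\<Sum>a\<in>A. G (s \<oplus> a \<otimes> a) / 2) \<le> (\<Sum>a\<in>A. \<Sum>b\<in>A. (if is_square_in R ((s \<oplus> a \<otimes> a) \<oplus> b \<otimes> b) then 1 else 0 :: real))"
    using A s by (intro sum_mono step1) auto
  moreover have "(\<Sum>a\<in>A. G (s \<oplus> a \<otimes> a) / 2) = (\<Sum>a\<in>A. G (s \<oplus> a \<otimes> a)) / 2"
    by (simp add: sum_divide_distrib)
  moreover have "32 * q \<le> M ^ 2" using big by (simp add: M_def q_def)
  ultimately have f1: "(\<Sum>a\<in>A. G (s \<oplus> a \<otimes> a)) / 2 \<le> (\<Sum>a\<in>A. \<Sum>b\<in>A. (if is_square_in R ((s \<oplus> a \<otimes> a) \<oplus> b \<otimes> b) then 1 else 0 :: real))"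
    and f2: "32 * q \<le> M ^ 2" by simp_all
  have "M ^ 2 / 4 \<le> (\<Sum>a\<in>A. G (s \<oplus> a \<otimes> a)) / 2" using lowG f2 q0 by linarith
  then show ?thesis using f1 unfolding M_def by linarith
qed

definition Tset :: "'a set \<Rightarrow> nat \<Rightarrow> 'a \<Rightarrow> (nat \<Rightarrow> 'a) set" where
  "Tset A d s = {x \<in> {..<d} \<rightarrow>\<^sub>E A. is_square_in R (s \<oplus> finsum R (\<lambda>i. x i \<otimes> x i) {..<d})}"

lemma T0: assumes "s \<in> carrier R" shows "card (Tset A 0 s) = (if is_square_in R s then 1 else 0)"
  using assms by (simp add: Tset_def finsum_empty)

lemma fs_Suc: assumes "x \<in> {..<Suc d} \<rightarrow> carrier R"
  shows "finsum R (\<lambda>i. x i \<otimes> x i) {..<Suc d} = x d \<otimes> x d \<oplus> finsum R (\<lambda>i. x i \<otimes> x i) {..<d}"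
  unfolding lessThan_Suc using assms by (subst finsum_insert) auto

lemma fs_upd: fixes d :: nat assumes "y \<in> {..<d} \<rightarrow> carrier R"
  shows "finsum R (\<lambda>i. (y(d := a)) i \<otimes> (y(d := a)) i) {..<d} = finsum R (\<lambda>i. y i \<otimes> y i) {..<d}"
proof (rule finsum_cong')
  show "(\<lambda>i. y i \<otimes> y i) \<in> {..<d} \<rightarrow> carrier R" using assms by auto
  fix i assume "i \<in> {..<d}"
  then show "(y(d := a)) i \<otimes> (y(d := a)) i = y i \<otimes> y i" by auto
qed simp

lemma fs_closed: "y \<in> {..<d} \<rightarrow> carrier R \<Longrightarrow> finsum R (\<lambda>i. y i \<otimes> y i) {..<d} \<in> carrier R"
  by (intro finsum_closed) auto

lemma TSuc: assumes fin: "finite (carrier R)" and A: "A \<subseteq> carrier R" and s: "s \<in> carrier R"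
  shows "card (Tset A (Suc d) s) = (\<Sum>a\<in>A. card (Tset A d (s \<oplus> a \<otimes> a)))"
proof -
  have fA: "finite A" using fin A finite_subset by blast
  have sub: "Tset A (Suc d) s \<subseteq> {..<Suc d} \<rightarrow>\<^sub>E A" unfolding Tset_def by blast
  have "finite ({..<Suc d} \<rightarrow>\<^sub>E A)" using fA by (intro finite_PiE) auto
  then have fT: "finite (Tset A (Suc d) s)" using sub finite_subset by blast
  have img: "(\<lambda>x. x d) ` Tset A (Suc d) s \<subseteq> A"
  proof
    fix z assume "z \<in> (\<lambda>x. x d) ` Tset A (Suc d) s"
    then obtain x where "x \<in> Tset A (Suc d) s" "z = x d" by blast
    then show "z \<in> A" using sub PiE_mem[of x "{..<Suc d}" "\<lambda>_. A" d] by auto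
  qed
  have "card (Tset A (Suc d) s) = (\<Sum>x\<in>Tset A (Suc d) s. (1::nat))" by simp
  also have "\<dots> = (\<Sum>a\<in>A. \<Sum>x\<in>{x. x \<in> Tset A (Suc d) s \<and> x d = a}. 1)"
    using sum.group[OF fT fA img, of "\<lambda>_. 1::nat"] by simp
  also have "\<dots> = (\<Sum>a\<in>A. card (Tset A d (s \<oplus> a \<otimes> a)))"
  proof (intro sum.cong refl)
    fix a assume a: "a \<in> A"
    have ac: "a \<in> carrier R" using a A by auto
    have eq: "{x. x \<in> Tset A (Suc d) s \<and> x d = a} = (\<lambda>y. y(d := a)) ` Tset A d (s \<oplus> a \<otimes> a)"
    proof
      show "{x. x \<in> Tset A (Suc d) s \<and> x d = a} \<subseteq> (\<lambda>y. y(d := a)) ` Tset A d (s \<oplus> a \<otimes> a)"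
      proof
        fix x assume x: "x \<in> {x. x \<in> Tset A (Suc d) s \<and> x d = a}"
        define y where "y = x(d := undefined)"
        have xP: "x \<in> {..<Suc d} \<rightarrow>\<^sub>E A" and xd: "x d = a"
          and sq: "is_square_in R (s \<oplus> finsum R (\<lambda>i. x i \<otimes> x i) {..<Suc d})"
          using x by (auto simp: Tset_def)
        have yP: "y \<in> {..<d} \<rightarrow>\<^sub>E A" using xP unfolding y_def PiE_iff extensional_def by auto
        have xy: "x = y(d := a)" using xd unfolding y_def by auto
        have xc: "x \<in> {..<Suc d} \<rightarrow> carrier R" using xP A by (auto simp: PiE_iff)
        have yc: "y \<in> {..<d} \<rightarrow> carrier R" using yP A by (auto simp: PiE_iff)
        have "s \<oplus> finsum R (\<lambda>i. x i \<otimes> x i) {..<Suc d} = s \<oplus> (a \<otimes> a \<oplus> finsum R (\<lambda>i. y i \<otimes> y i) {..<d})"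
          using fs_Suc[OF xc] fs_upd[OF yc, of a] xy xd by simp
        also have "\<dots> = (s \<oplus> a \<otimes> a) \<oplus> finsum R (\<lambda>i. y i \<otimes> y i) {..<d}"
          using s ac fs_closed[OF yc] by (intro a_assoc[symmetric]) auto
        finally have "y \<in> Tset A d (s \<oplus> a \<otimes> a)" using sq yP by (simp add: Tset_def)
        then show "x \<in> (\<lambda>y. y(d := a)) ` Tset A d (s \<oplus> a \<otimes> a)" using xy by blast
      qed
    next
      show "(\<lambda>y. y(d := a)) ` Tset A d (s \<oplus> a \<otimes> a) \<subseteq> {x. x \<in> Tset A (Suc d) s \<and> x d = a}"
      proof
        fix x assume "x \<in> (\<lambda>y. y(d := a)) ` Tset A d (s \<oplus> a \<otimes> a)"
        then obtain y where y: "y \<in> Tset A d (s \<oplus> a \<otimes> a)" and xy: "x = y(d := a)" by blast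
        have yP: "y \<in> {..<d} \<rightarrow>\<^sub>E A" and sq: "is_square_in R ((s \<oplus> a \<otimes> a) \<oplus> finsum R (\<lambda>i. y i \<otimes> y i) {..<d})"
          using y by (auto simp: Tset_def)
        have xP: "x \<in> {..<Suc d} \<rightarrow>\<^sub>E A"
        proof (rule PiE_I)
          fix i assume i: "i \<in> {..<Suc d}"
          show "x i \<in> A"
          proof (cases "i = d")
            case True then show ?thesis using a xy by simp
          next
            case False then have "i \<in> {..<d}" using i by auto
            then show ?thesis using PiE_mem[OF yP] xy False by simp
          qed
        next
          fix i assume i: "i \<notin> {..<Suc d}"
          then have "i \<noteq> d" "i \<notin> {..<d}" by auto
          then show "x i = undefined" using PiE_arb[OF yP] xy by simp
        qed
        have xc: "x \<in> {..<Suc d} \<rightarrow> carrier R" using xP A by (auto simp: PiE_iff)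
        have yc: "y \<in> {..<d} \<rightarrow> carrier R" using yP A by (auto simp: PiE_iff)
        have "s \<oplus> finsum R (\<lambda>i. x i \<otimes> x i) {..<Suc d} = s \<oplus> (a \<otimes> a \<oplus> finsum R (\<lambda>i. y i \<otimes> y i) {..<d})"
          using fs_Suc[OF xc] fs_upd[OF yc, of a] xy by simp
        also have "\<dots> = (s \<oplus> a \<otimes> a) \<oplus> finsum R (\<lambda>i. y i \<otimes> y i) {..<d}"
          using s ac fs_closed[OF yc] by (intro a_assoc[symmetric]) auto
        finally show "x \<in> {x. x \<in> Tset A (Suc d) s \<and> x d = a}" using sq xP xy by (simp add: Tset_def)
      qed
    qed
    have inj: "inj_on (\<lambda>y. y(d := a)) (Tset A d (s \<oplus> a \<otimes> a))"
    proof (rule inj_onI)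
      fix y1 y2 assume y: "y1 \<in> Tset A d (s \<oplus> a \<otimes> a)" "y2 \<in> Tset A d (s \<oplus> a \<otimes> a)" "y1(d := a) = y2(d := a)"
      then have "y1 d = y2 d" by (auto simp: Tset_def PiE_iff extensional_def)
      then show "y1 = y2" using y(3) by (metis fun_upd_triv fun_upd_upd)
    qed
    show "(\<Sum>x\<in>{x. x \<in> Tset A (Suc d) s \<and> x d = a}. 1) = card (Tset A d (s \<oplus> a \<otimes> a))"
      using eq inj by (simp add: card_image)
  qed
  finally show ?thesis .
qed

lemma T_lower: assumes fin: "finite (carrier R)" and A: "A \<subseteq> carrier R" and two: "\<one> \<oplus> \<one> \<noteq> \<zero>"
    and big: "32 * real (card (carrier R)) \<le> real (card A) ^ 2" and d: "d \<ge> 2"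
  shows "\<forall>s \<in> carrier R. real (card A) ^ d / 4 \<le> real (card (Tset A d s))"
  using d
proof (induction d rule: dec_induct)
  case base
  show ?case
  proof
    fix s assume s: "s \<in> carrier R"
    have "card (Tset A 2 s) = (\<Sum>a\<in>A. \<Sum>b\<in>A. card (Tset A 0 ((s \<oplus> a \<otimes> a) \<oplus> b \<otimes> b)))"
      using TSuc[OF fin A] s A by (simp add: numeral_2_eq_2 subset_iff)
    also have "\<dots> = (\<Sum>a\<in>A. \<Sum>b\<in>A. (if is_square_in R ((s \<oplus> a \<otimes> a) \<oplus> b \<otimes> b) then 1 else 0))"
      using s A by (intro sum.cong refl T0) auto
    finally have "real (card (Tset A 2 s)) = (\<Sum>a\<in>A. \<Sum>b\<in>A. real (if is_square_in R ((s \<oplus> a \<otimes> a) \<oplus> b \<otimes> b) then 1 else 0))"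
      by (simp only: of_nat_sum)
    also have "\<dots> = (\<Sum>a\<in>A. \<Sum>b\<in>A. (if is_square_in R ((s \<oplus> a \<otimes> a) \<oplus> b \<otimes> b) then 1 else 0 :: real))"
      by (intro sum.cong refl) simp
    finally have "real (card (Tset A 2 s)) = (\<Sum>a\<in>A. \<Sum>b\<in>A. (if is_square_in R ((s \<oplus> a \<otimes> a) \<oplus> b \<otimes> b) then 1 else 0 :: real))" .
    then show "real (card A) ^ 2 / 4 \<le> real (card (Tset A 2 s))" using count_main[OF fin A two s big] by simp
  qed
next
  case (step n)
  show ?case
  proof
    fix s assume s: "s \<in> carrier R"
    have "real (card (Tset A (Suc n) s)) = (\<Sum>a\<in>A. real (card (Tset A n (s \<oplus> a \<otimes> a))))"
      using TSuc[OF fin A s] by simp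
    also have "\<dots> \<ge> (\<Sum>a\<in>A. real (card A) ^ n / 4)"
      using step.IH s A by (intro sum_mono) auto
    finally show "real (card A) ^ Suc n / 4 \<le> real (card (Tset A (Suc n) s))" by simp
  qed
qed

lemma T_char2: assumes fin: "finite (carrier R)" and A: "A \<subseteq> carrier R" and two: "\<one> \<oplus> \<one> = \<zero>"
    and s: "s \<in> carrier R"
  shows "card (Tset A d s) = card A ^ d"
proof -
  have "\<forall>x\<in>{..<d} \<rightarrow>\<^sub>E A. is_square_in R (s \<oplus> finsum R (\<lambda>i. x i \<otimes> x i) {..<d})"
  proof
    fix x assume "x \<in> {..<d} \<rightarrow>\<^sub>E A"
    then have "(\<lambda>i. x i \<otimes> x i) \<in> {..<d} \<rightarrow> carrier R" using A by (auto simp: PiE_iff)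
    then have "s \<oplus> finsum R (\<lambda>i. x i \<otimes> x i) {..<d} \<in> carrier R" using s by (simp add: finsum_closed)
    then show "is_square_in R (s \<oplus> finsum R (\<lambda>i. x i \<otimes> x i) {..<d})" using char2_square[OF fin two] by simp
  qed
  then have "Tset A d s = {..<d} \<rightarrow>\<^sub>E A" unfolding Tset_def by auto
  then show ?thesis by (simp add: card_PiE)
qed
end

theorem lemma6p2:
  fixes d :: nat
  assumes "d \<ge> 3"
  shows "\<exists>c > 0. \<exists>C > 0. \<forall>(R :: nat ring) A.
           field R \<and> finite (carrier R) \<and>
           (\<exists>p k. Factorial_Ring.prime (p::nat) \<and> odd p \<and> k > 0 \<and> card (carrier R) = p ^ k) \<and>
           A \<subseteq> carrier R \<and> real (card A) \<ge> c * sqrt (real (card (carrier R)))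
           \<longrightarrow> real (card (square_sum_tuples R A d)) \<ge> C * real (card A) ^ d"
proof -
  have key: "real (card (square_sum_tuples R A d)) \<ge> 1 / 4 * real (card A) ^ d"
    if F: "field R" and fin: "finite (carrier R)" and A: "A \<subseteq> carrier R"
      and big: "6 * sqrt (real (card (carrier R))) \<le> real (card A)" for R :: "nat ring" and A
  proof -
    interpret field R by (rule F)
    have z: "\<zero>\<^bsub>R\<^esub> \<oplus>\<^bsub>R\<^esub> finsum R (\<lambda>i. x i \<otimes>\<^bsub>R\<^esub> x i) {..<d} = finsum R (\<lambda>i. x i \<otimes>\<^bsub>R\<^esub> x i) {..<d}"
      if "x \<in> {..<d} \<rightarrow>\<^sub>E A" for x
    proof -
      have "x \<in> {..<d} \<rightarrow> carrier R" using that A by (auto simp: PiE_iff)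
      then show ?thesis by (rule l_zero[OF fs_closed])
    qed
    have eq: "square_sum_tuples R A d = Tset A d \<zero>\<^bsub>R\<^esub>"
      unfolding square_sum_tuples_def Tset_def using z by auto
    have "0 \<le> sqrt (real (card (carrier R)))" by simp
    then have "(6 * sqrt (real (card (carrier R)))) ^ 2 \<le> real (card A) ^ 2"
      using big by (intro power_mono) auto
    then have "36 * real (card (carrier R)) \<le> real (card A) ^ 2"
      by (simp add: power_mult_distrib)
    then have big2: "32 * real (card (carrier R)) \<le> real (card A) ^ 2" by linarith
    show ?thesis
    proof (cases "\<one>\<^bsub>R\<^esub> \<oplus>\<^bsub>R\<^esub> \<one>\<^bsub>R\<^esub> = \<zero>\<^bsub>R\<^esub>")
      case True
      then have "card (Tset A d \<zero>\<^bsub>R\<^esub>) = card A ^ d" using T_char2[OF fin A] by simp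
      then show ?thesis unfolding eq by simp
    next
      case False
      have "d \<ge> 2" using assms by simp
      then show ?thesis using T_lower[OF fin A False big2] eq by simp
    qed
  qed
  have "\<forall>(R :: nat ring) A.
           field R \<and> finite (carrier R) \<and>
           (\<exists>p k. Factorial_Ring.prime (p::nat) \<and> odd p \<and> k > 0 \<and> card (carrier R) = p ^ k) \<and>
           A \<subseteq> carrier R \<and> real (card A) \<ge> 6 * sqrt (real (card (carrier R)))
           \<longrightarrow> real (card (square_sum_tuples R A d)) \<ge> 1 / 4 * real (card A) ^ d"
    using key by blast
  then show ?thesis
    apply -
    apply (rule exI[of _ "6::real"], rule conjI, simp)
    apply (rule exI[of _ "1/4::real"], rule conjI, simp)
    by assumption
qed

end
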